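(* Let $b \geq 2$ be an integer and let $r$ be an integer with $1 \leq r \leq b$. Let $n_1, n_2, \dots, n_r$ be integers such that $0 \leq n_1 \leq n_2 \leq \dots \leq n_r$. Then $$ \sum_{1 \leq i \leq r} S_b(n_i) + \sum_{1 \leq i \leq r-1} (r-i)\, n_i \leq S_b\left(\sum_{1 \leq i \leq r} n_i\right). $$
   Context: For an integer $b \geq 2$ and a nonnegative integer $n$, $s_b(n)$ denotes the sum of the digits in the base-$b$ expansion of $n$, and $S_b(n) := \sum_{1 \leq j \leq n-1} s_b(j)$ (an empty sum being $0$, so $S_b(0)=S_b(1)=0$). *)

theory Defs
  imports Main
begin

fun digit_sum :: "nat \<Rightarrow> nat \<Rightarrow> nat" where
  "digit_sum b n = (if b < 2 \<or> n = 0 then 0 else n mod b + digit_sum b (n div b))"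

declare digit_sum.simps[simp del]

definition S :: "nat \<Rightarrow> nat \<Rightarrow> nat" where
  "S b n = (\<Sum>j = 1..<n. digit_sum b j)"

end

theory Submission
  imports Defs
begin

definition SS :: "nat \<Rightarrow> nat \<Rightarrow> nat" where
  "SS b n = (\<Sum>j<n. digit_sum b j)"

definition tri :: "nat \<Rightarrow> nat" where "tri n = (\<Sum>i<n. i)"

definition LL :: "nat \<Rightarrow> nat \<Rightarrow> nat" where
  "LL c T = (\<Sum>x<T. x div c + x mod c)"

lemma ds0: "digit_sum b 0 = 0"
  by (simp add: digit_sum.simps)

lemma ds_step: assumes "b \<ge> 2" "t < b" shows "digit_sum b (b*q+t) = digit_sum b q + t"
proof (cases "b*q+t = 0")
  case True then show ?thesis using assms by (simp add: ds0)
next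
  case False
  have "digit_sum b (b*q+t) = (b*q+t) mod b + digit_sum b ((b*q+t) div b)"
    using False assms by (subst digit_sum.simps) (simp add: ds0)
  also have "(b*q+t) mod b = t" using assms by simp
  also have "(b*q+t) div b = q" using assms by simp
  finally show ?thesis by simp
qed

lemma ds_small: "b \<ge> 2 \<Longrightarrow> y < b \<Longrightarrow> digit_sum b y = y"
  using ds_step[of b y 0] by (simp add: ds0)

lemma ds_two: assumes "b \<ge> 2" "x < b*b" shows "digit_sum b x = x div b + x mod b"
proof -
  have "x = b*(x div b) + x mod b" by simp
  then have "digit_sum b x = digit_sum b (x div b) + x mod b"
    using ds_step[of b "x mod b" "x div b"] assms by simp
  moreover have "x div b < b" using assms by (simp add: less_mult_imp_div_less)
  ultimately show ?thesis using ds_small assms by simp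
qed

lemma S_SS: "S b n = SS b n"
proof -
  have "SS b n = (\<Sum>j\<in>{0..<n}. digit_sum b j)" by (simp add: SS_def lessThan_atLeast0)
  also have "\<dots> = (\<Sum>j\<in>{1..<n}. digit_sum b j)"
  proof (cases n)
    case 0 then show ?thesis by simp
  next
    case (Suc m)
    then show ?thesis by (simp add: sum.atLeast_Suc_lessThan ds0)
  qed
  finally show ?thesis by (simp add: S_def)
qed

lemma SS_add: "SS b (m + k) = SS b m + (\<Sum>i<k. digit_sum b (m+i))"
  by (induction k) (simp_all add: SS_def)

lemma SS_mult: assumes "b \<ge> 2" shows "SS b (b*q) = b * SS b q + q * tri b"
proof (induction q)
  case 0 then show ?case by (simp add: SS_def)
next
  case (Suc q)
  have "SS b (b * Suc q) = SS b (b*q) + (\<Sum>i<b. digit_sum b (b*q+i))"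
    by (metis SS_add mult_Suc_right add.commute)
  also have "(\<Sum>i<b. digit_sum b (b*q+i)) = (\<Sum>i<b. digit_sum b q + i)"
    by (rule sum.cong) (use ds_step assms in auto)
  also have "\<dots> = b * digit_sum b q + tri b" by (simp add: sum.distrib tri_def)
  finally show ?case using Suc by (simp add: SS_def algebra_simps)
qed

lemma SS_rec: assumes "b \<ge> 2" "t < b"
  shows "SS b (b*q+t) = b*SS b q + q*tri b + t*digit_sum b q + tri t"
proof -
  have "SS b (b*q+t) = SS b (b*q) + (\<Sum>i<t. digit_sum b (b*q+i))" by (rule SS_add)
  also have "(\<Sum>i<t. digit_sum b (b*q+i)) = (\<Sum>i<t. digit_sum b q + i)"
    by (rule sum.cong) (use ds_step assms in auto)
  also have "\<dots> = t * digit_sum b q + tri t" by (simp add: sum.distrib tri_def)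
  finally show ?thesis using SS_mult[OF assms(1)] by simp
qed

lemma SS_small: assumes "b \<ge> 2" "y \<le> b" shows "SS b y = tri y"
  unfolding SS_def tri_def by (rule sum.cong) (use ds_small assms in auto)

lemma tri_0[simp]: "tri 0 = 0" by (simp add: tri_def)
lemma LL_0[simp]: "LL c 0 = 0" by (simp add: LL_def)
lemma tri_Suc: "tri (Suc n) = tri n + n" by (simp add: tri_def)
lemma tri_add: "tri (a + k) = tri a + tri k + a*k"
  by (induction k) (simp_all add: tri_Suc algebra_simps)

lemma LL_base: assumes "u \<le> c" shows "LL c u = tri u"
  unfolding LL_def tri_def by (rule sum.cong) (use assms in auto)

lemma LL_cadd: assumes "c > 0" shows "LL c (c + k) = tri c + LL c k + k"
proof (induction k)
  case 0 then show ?case using LL_base[of c c] by (simp add: LL_def)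
next
  case (Suc k)
  have "LL c (c + Suc k) = LL c (c+k) + ((c+k) div c + (c+k) mod c)" by (simp add: LL_def)
  also have "(c+k) div c = k div c + 1" using assms by (simp add: div_add_self1)
  also have "(c+k) mod c = k mod c" by simp
  finally show ?case using Suc by (simp add: LL_def)
qed

lemma LL_closed: assumes "u < c" shows "LL c (q*c+u) = c*tri q + q*tri c + u*q + tri u"
proof (induction q)
  case 0 then show ?case using LL_base[of u c] assms by simp
next
  case (Suc q)
  have "LL c (Suc q * c + u) = LL c (c + (q*c+u))" by (simp add: algebra_simps)
  also have "\<dots> = tri c + LL c (q*c+u) + (q*c+u)" using LL_cadd assms by simp
  finally show ?case using Suc by (simp add: tri_Suc algebra_simps)
qed

lemma LL_mono: assumes "T \<le> c*c" shows "LL c T \<le> LL (Suc c) T"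
proof (cases "c = 0")
  case True then show ?thesis using assms by simp
next
  case False
  define q where "q = T div c"
  define u where "u = T mod c"
  have T: "T = q*c + u" by (simp add: q_def u_def)
  have uc: "u < c" using False by (simp add: u_def)
  have qc: "q \<le> c" using div_le_mono[OF assms, of c] False by (simp add: q_def)
  have L1: "LL c T = c*tri q + q*tri c + u*q + tri u" using T LL_closed[OF uc] by simp
  show ?thesis
  proof (cases "q \<le> u")
    case True
    define v where "v = u - q"
    have "T = q * Suc c + v" using T True by (simp add: v_def algebra_simps)
    moreover have "v < Suc c" using uc by (simp add: v_def)
    ultimately have L2: "LL (Suc c) T = Suc c * tri q + q * tri (Suc c) + v*q + tri v"
      using LL_closed[of v "Suc c" q] by simp
    have uq: "u = q + v" using True by (simp add: v_def)
    have "LL (Suc c) T + q*u = LL c T + q*c"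
      unfolding L1 L2 uq by (simp add: tri_Suc tri_add algebra_simps)
    moreover have "q*u \<le> q*c" using uc by simp
    ultimately show ?thesis by linarith
  next
    case False
    then obtain p where p: "q = Suc p" by (cases q) auto
    obtain w where w: "c = Suc p + w" using qc p by (metis le_add_diff_inverse)
    have "T = p * Suc c + (u + Suc w)" using T p w by (simp add: algebra_simps)
    moreover have "u + Suc w < Suc c" using False p w by simp
    ultimately have L2: "LL (Suc c) T = Suc c * tri p + p * tri (Suc c) + (u + Suc w)*p + tri (u + Suc w)"
      using LL_closed[of "u + Suc w" "Suc c" p] by simp
    have "Suc c * tri p + p * tri (Suc c) + (u + Suc w)*p + tri (u + Suc w)
        = (c*tri q + q*tri c + u*q + tri u) + u*w"
      unfolding p w by (simp add: tri_Suc tri_add algebra_simps)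
    then have "LL (Suc c) T = LL c T + u*w" using L1 L2 by simp
    then show ?thesis by simp
  qed
qed

definition RR :: "nat \<Rightarrow> (nat \<Rightarrow> nat) \<Rightarrow> nat" where
  "RR c \<tau> = (\<Sum>d<c. tri (\<tau> d) + d * \<tau> d)"

lemma RL_step:
  assumes IH: "\<And>\<tau>. (\<forall>k l. k \<le> l \<longrightarrow> l < c \<longrightarrow> \<tau> l \<le> \<tau> k) \<Longrightarrow> (\<forall>d<c. \<tau> d \<le> c)
      \<Longrightarrow> RR c \<tau> \<le> LL c (\<Sum>d<c. \<tau> d)"
  shows "(\<forall>k l. k \<le> l \<longrightarrow> l < Suc c \<longrightarrow> \<tau> l \<le> \<tau> k) \<longrightarrow> (\<forall>d<Suc c. \<tau> d \<le> Suc c)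
      \<longrightarrow> RR (Suc c) \<tau> \<le> LL (Suc c) (\<Sum>d<Suc c. \<tau> d)"
proof (induction "\<Sum>d<Suc c. \<tau> d" arbitrary: \<tau> rule: less_induct)
  case less
  define n where "n = Suc c"
  show ?case
  proof (intro impI)
    assume desc: "\<forall>k l. k \<le> l \<longrightarrow> l < Suc c \<longrightarrow> \<tau> l \<le> \<tau> k"
      and bd: "\<forall>d<Suc c. \<tau> d \<le> Suc c"
    show "RR (Suc c) \<tau> \<le> LL (Suc c) (\<Sum>d<Suc c. \<tau> d)"
    proof (cases "\<forall>d<Suc c. 1 \<le> \<tau> d")
      case True
      define \<tau>' where "\<tau>' = (\<lambda>d. \<tau> d - 1)"
      have tsum: "(\<Sum>d<Suc c. \<tau> d) = Suc c + (\<Sum>d<Suc c. \<tau>' d)"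
      proof -
        have "(\<Sum>d<Suc c. \<tau> d) = (\<Sum>d<Suc c. 1 + \<tau>' d)"
          by (rule sum.cong) (use True in \<open>auto simp: \<tau>'_def\<close>)
        also have "\<dots> = (\<Sum>d<Suc c. 1) + (\<Sum>d<Suc c. \<tau>' d)" by (rule sum.distrib)
        finally show ?thesis by simp
      qed
      have rr: "RR (Suc c) \<tau> = RR (Suc c) \<tau>' + (\<Sum>d<Suc c. \<tau>' d) + tri (Suc c)"
      proof -
        have "RR (Suc c) \<tau> = (\<Sum>d<Suc c. (tri (\<tau>' d) + d * \<tau>' d) + \<tau>' d + d)"
          unfolding RR_def
        proof (rule sum.cong)
          fix d assume "d \<in> {..<Suc c}"
          then have "\<tau> d = Suc (\<tau>' d)" using True by (auto simp: \<tau>'_def)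
          then show "tri (\<tau> d) + d * \<tau> d = (tri (\<tau>' d) + d * \<tau>' d) + \<tau>' d + d"
            by (simp add: tri_Suc)
        qed simp
        then show ?thesis by (simp add: sum.distrib RR_def tri_def)
      qed
      have "(\<Sum>d<Suc c. \<tau>' d) < (\<Sum>d<Suc c. \<tau> d)" using tsum by simp
      moreover have "\<forall>k l. k \<le> l \<longrightarrow> l < Suc c \<longrightarrow> \<tau>' l \<le> \<tau>' k"
        using desc by (auto simp: \<tau>'_def diff_le_mono)
      moreover have "\<forall>d<Suc c. \<tau>' d \<le> Suc c" using bd by (auto simp: \<tau>'_def)
      ultimately have "RR (Suc c) \<tau>' \<le> LL (Suc c) (\<Sum>d<Suc c. \<tau>' d)"
        using less by blast
      then show ?thesis
        using rr tsum LL_cadd[of "Suc c" "\<Sum>d<Suc c. \<tau>' d"] by simp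
    next
      case notA: False
      show ?thesis
      proof (cases "\<tau> 0 = Suc c")
        case True
        define \<tau>' where "\<tau>' = (\<lambda>d. if Suc d < Suc c then \<tau> (Suc d) else 0)"
        have s1: "(\<Sum>d<Suc c. \<tau>' d) = (\<Sum>d<c. \<tau> (Suc d))"
          by (simp add: \<tau>'_def)
        have tsum: "(\<Sum>d<Suc c. \<tau> d) = Suc c + (\<Sum>d<Suc c. \<tau>' d)"
          using True s1 sum.lessThan_Suc_shift[of \<tau> c] by linarith
        have r1: "RR (Suc c) \<tau>' = (\<Sum>d<c. tri (\<tau> (Suc d)) + d * \<tau> (Suc d))"
          by (simp add: RR_def \<tau>'_def)
        have rr: "RR (Suc c) \<tau> = RR (Suc c) \<tau>' + (\<Sum>d<Suc c. \<tau>' d) + tri (Suc c)"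
        proof -
          have "RR (Suc c) \<tau> = (tri (\<tau> 0) + 0 * \<tau> 0) + (\<Sum>d<c. tri (\<tau> (Suc d)) + Suc d * \<tau> (Suc d))"
            unfolding RR_def by (rule sum.lessThan_Suc_shift)
          also have "(\<Sum>d<c. tri (\<tau> (Suc d)) + Suc d * \<tau> (Suc d))
              = (\<Sum>d<c. (tri (\<tau> (Suc d)) + d * \<tau> (Suc d)) + \<tau> (Suc d))"
            by (rule sum.cong) auto
          also have "\<dots> = (\<Sum>d<c. tri (\<tau> (Suc d)) + d * \<tau> (Suc d)) + (\<Sum>d<c. \<tau> (Suc d))"
            by (rule sum.distrib)
          finally show ?thesis using r1 s1 True by simp
        qed
        have "(\<Sum>d<Suc c. \<tau>' d) < (\<Sum>d<Suc c. \<tau> d)" using tsum by simp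
        moreover have "\<forall>k l. k \<le> l \<longrightarrow> l < Suc c \<longrightarrow> \<tau>' l \<le> \<tau>' k"
          using desc by (auto simp: \<tau>'_def)
        moreover have "\<forall>d<Suc c. \<tau>' d \<le> Suc c" using bd by (auto simp: \<tau>'_def)
        ultimately have "RR (Suc c) \<tau>' \<le> LL (Suc c) (\<Sum>d<Suc c. \<tau>' d)"
          using less by blast
        then show ?thesis
          using rr tsum LL_cadd[of "Suc c" "\<Sum>d<Suc c. \<tau>' d"] by simp
      next
        case False
        obtain d0 where d0: "d0 < Suc c" "\<tau> d0 = 0" using notA by auto
        have tc: "\<tau> c = 0" using desc[rule_format, of d0 c] d0 by simp
        have t0: "\<tau> 0 \<le> c" using False bd by (metis le_SucE zero_less_Suc)
        have bd': "\<forall>d<c. \<tau> d \<le> c" using desc t0 by (meson le0 less_SucI order_trans)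
        have desc': "\<forall>k l. k \<le> l \<longrightarrow> l < c \<longrightarrow> \<tau> l \<le> \<tau> k" using desc by auto
        have "RR c \<tau> \<le> LL c (\<Sum>d<c. \<tau> d)" using IH desc' bd' by blast
        moreover have "(\<Sum>d<c. \<tau> d) \<le> c * c"
          using sum_mono[of "{..<c}" \<tau> "\<lambda>_. c"] bd' by simp
        ultimately have "RR c \<tau> \<le> LL (Suc c) (\<Sum>d<c. \<tau> d)"
          using LL_mono order_trans by blast
        moreover have "RR (Suc c) \<tau> = RR c \<tau>" using tc by (simp add: RR_def)
        moreover have "(\<Sum>d<Suc c. \<tau> d) = (\<Sum>d<c. \<tau> d)" using tc by simp
        ultimately show ?thesis by simp
      qed
    qed
  qed
qed

lemma RL: "(\<forall>k l. k \<le> l \<longrightarrow> l < c \<longrightarrow> \<tau> l \<le> \<tau> k) \<Longrightarrow> (\<forall>d<c. \<tau> d \<le> c)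
      \<Longrightarrow> RR c \<tau> \<le> LL c (\<Sum>d<c. \<tau> d)"
proof (induction c arbitrary: \<tau>)
  case 0 then show ?case by (simp add: RR_def)
next
  case (Suc c)
  then show ?case using RL_step[of c \<tau>] by blast
qed

lemma ds_suc_le: assumes "b \<ge> 2" shows "digit_sum b (Suc y) \<le> digit_sum b y + 1"
proof (induction y rule: less_induct)
  case (less y)
  define q where "q = y div b"
  define t where "t = y mod b"
  have y: "y = b*q + t" by (simp add: q_def t_def)
  have tb: "t < b" using assms by (simp add: t_def)
  show ?case
  proof (cases "Suc t < b")
    case True
    have "Suc y = b*q + Suc t" using y by simp
    then show ?thesis using ds_step[OF assms True, of q] ds_step[OF assms tb, of q] y by simp
  next
    case False
    then have t: "t = b - 1" using tb by simp
    have "Suc y = b*(Suc q) + 0" using y t assms by (simp add: algebra_simps)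
    then have "digit_sum b (Suc y) = digit_sum b (Suc q)" using ds_step[OF assms, of 0 "Suc q"] assms by simp
    moreover have "q < y"
    proof -
      have "0 < y" using y t assms by simp
      then show ?thesis unfolding q_def using assms by (simp add: div_less_dividend)
    qed
    ultimately have "digit_sum b (Suc y) \<le> digit_sum b q + 1" using less by simp
    also have "\<dots> \<le> digit_sum b y + 1" using ds_step[OF assms tb, of q] y by simp
    finally show ?thesis .
  qed
qed

lemma k1:
  assumes "b \<ge> 2" "i < b"
  shows "digit_sum b (Q+i) + (digit_sum b (Q div b) + b - digit_sum b (Suc (Q div b)))
           * (if b \<le> Q mod b + i then 1 else 0) = digit_sum b Q + i"
proof -
  define a where "a = Q div b"
  define r where "r = Q mod b"
  have Q: "Q = b*a + r" by (simp add: a_def r_def)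
  have rb: "r < b" using assms by (simp add: r_def)
  have dQ: "digit_sum b Q = digit_sum b a + r" using Q ds_step[OF assms(1) rb] by simp
  show ?thesis
  proof (cases "b \<le> r + i")
    case False
    then have "digit_sum b (Q+i) = digit_sum b a + (r + i)"
      using Q ds_step[OF assms(1), of "r+i" a] by (simp add: add.assoc)
    then show ?thesis using False dQ by (simp add: r_def)
  next
    case True
    have e: "Q + i = b * Suc a + (r + i - b)" using Q True by (simp add: algebra_simps)
    have "r + i - b < b" using rb assms by simp
    from ds_step[OF assms(1) this, of "Suc a"] e
    have "digit_sum b (Q+i) = digit_sum b (Suc a) + (r + i - b)" by simp
    moreover have "digit_sum b (Suc a) \<le> digit_sum b a + b" using ds_suc_le[OF assms(1), of a] assms by simp
    ultimately show ?thesis using True dQ by (simp add: r_def a_def[symmetric])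
  qed
qed

lemma cnt: "(\<Sum>i<n. (if k \<le> (i::nat) then 1 else 0::nat)) = n - k"
  by (induction n) auto

lemma sum_diff_ge: "(\<Sum>d<n. f d) - n*k \<le> (\<Sum>d<n. (f d - (k::nat)))"
  by (induction n) auto

lemma SC:
  assumes b2: "b \<ge> 2" and desc: "\<forall>k l. k \<le> l \<longrightarrow> l < b \<longrightarrow> \<tau> l \<le> \<tau> k"
    and bd: "\<forall>d<b. \<tau> d \<le> b"
  shows "(\<Sum>d<b. SS b (Q + \<tau> d) + d*(Q + \<tau> d)) \<le> SS b (b*Q + (\<Sum>d<b. \<tau> d))"
proof -
  define T where "T = (\<Sum>d<b. \<tau> d)"
  define \<kappa> where "\<kappa> = digit_sum b (Q div b) + b - digit_sum b (Suc (Q div b))"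
  define r where "r = Q mod b"
  define ind where "ind = (\<lambda>i::nat. if b \<le> r + i then 1 else 0::nat)"
  define X where "X = (\<Sum>d<b. \<Sum>i<\<tau> d. digit_sum b (Q+i))"
  define Y where "Y = (\<Sum>x<T. digit_sum b (b*Q+x))"
  define CA where "CA = (\<Sum>d<b. \<Sum>i<\<tau> d. ind i)"
  define CB where "CB = (\<Sum>x<T. ind (x div b))"
  have Tb: "T \<le> b*b" unfolding T_def using sum_mono[of "{..<b}" \<tau> "\<lambda>_. b"] bd by simp
  have XA: "X + \<kappa> * CA = T * digit_sum b Q + (\<Sum>d<b. tri (\<tau> d))"
  proof -
    have "X + \<kappa> * CA = (\<Sum>d<b. \<Sum>i<\<tau> d. digit_sum b (Q+i) + \<kappa> * ind i)"
      by (simp add: X_def CA_def sum.distrib sum_distrib_left)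
    also have "\<dots> = (\<Sum>d<b. \<Sum>i<\<tau> d. digit_sum b Q + i)"
    proof (rule sum.cong[OF refl], rule sum.cong[OF refl])
      fix d i assume "d \<in> {..<b}" "i \<in> {..<\<tau> d}"
      then have "i < b" using bd by (meson lessThan_iff order_less_le_trans)
      then show "digit_sum b (Q+i) + \<kappa> * ind i = digit_sum b Q + i"
        using k1[OF b2, of i Q] by (simp add: \<kappa>_def ind_def r_def)
    qed
    also have "\<dots> = (\<Sum>d<b. \<tau> d * digit_sum b Q + tri (\<tau> d))"
      by (simp add: sum.distrib tri_def)
    also have "\<dots> = T * digit_sum b Q + (\<Sum>d<b. tri (\<tau> d))"
      by (simp add: sum.distrib T_def sum_distrib_right)
    finally show ?thesis .
  qed
  have YB: "Y + \<kappa> * CB = T * digit_sum b Q + LL b T"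
  proof -
    have "Y + \<kappa> * CB = (\<Sum>x<T. digit_sum b (b*Q+x) + \<kappa> * ind (x div b))"
      by (simp add: Y_def CB_def sum.distrib sum_distrib_left)
    also have "\<dots> = (\<Sum>x<T. digit_sum b Q + (x div b + x mod b))"
    proof (rule sum.cong[OF refl])
      fix x assume "x \<in> {..<T}"
      then have xb: "x < b*b" using Tb by simp
      then have xdb: "x div b < b" by (simp add: less_mult_imp_div_less)
      have "b*Q + x = b*(Q + x div b) + x mod b" by (simp add: algebra_simps)
      then have "digit_sum b (b*Q+x) = digit_sum b (Q + x div b) + x mod b"
        using ds_step[OF b2, of "x mod b" "Q + x div b"] b2 by simp
      then show "digit_sum b (b*Q+x) + \<kappa> * ind (x div b) = digit_sum b Q + (x div b + x mod b)"
        using k1[OF b2 xdb, of Q] by (simp add: \<kappa>_def ind_def r_def)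
    qed
    also have "\<dots> = T * digit_sum b Q + LL b T" by (simp add: sum.distrib LL_def)
    finally show ?thesis .
  qed
  have CAB: "CB \<le> CA"
  proof -
    define k0 where "k0 = b - r"
    have rb: "r < b" using b2 by (simp add: r_def)
    have ind1: "ind i = (if k0 \<le> i then 1 else 0)" for i using rb by (simp add: ind_def k0_def le_diff_conv add.commute)
    have "CB = (\<Sum>x<T. if b*k0 \<le> x then 1 else 0)"
      unfolding CB_def ind1
      by (rule sum.cong[OF refl]) (use b2 in \<open>auto simp: less_eq_div_iff_mult_less_eq mult.commute\<close>)
    also have "\<dots> = T - b*k0" by (rule cnt)
    finally have cb: "CB = T - b*k0" .
    have ca: "CA = (\<Sum>d<b. \<tau> d - k0)" unfolding CA_def ind1 cnt ..
    show ?thesis unfolding cb ca T_def by (rule sum_diff_ge)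
  qed
  have RL': "(\<Sum>d<b. tri (\<tau> d)) + (\<Sum>d<b. d * \<tau> d) \<le> LL b T"
    using RL[OF desc bd] by (simp add: RR_def T_def sum.distrib)
  have kk: "\<kappa> * CB \<le> \<kappa> * CA" using CAB by simp
  have main: "X + (\<Sum>d<b. d * \<tau> d) \<le> Y" using XA YB RL' kk by linarith
  have lhs: "(\<Sum>d<b. SS b (Q + \<tau> d) + d*(Q + \<tau> d)) = b * SS b Q + Q * tri b + X + (\<Sum>d<b. d * \<tau> d)"
    by (simp add: SS_add X_def sum.distrib algebra_simps tri_def sum_distrib_left sum_distrib_right)
  have rhs: "SS b (b*Q + T) = b * SS b Q + Q * tri b + Y"
    using SS_add[of b "b*Q" T] SS_mult[OF b2, of Q] by (simp add: Y_def)
  show ?thesis using lhs rhs main by (simp add: T_def)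
qed

lemma sum_ind: "t \<le> n \<Longrightarrow> (\<Sum>d<n. if d < t then f d else 0) = (\<Sum>d<(t::nat). f d)"
proof (induction n)
  case 0 then show ?case by simp
next
  case (Suc n)
  show ?case
  proof (cases "t \<le> n")
    case True then show ?thesis using Suc by simp
  next
    case False
    then have "t = Suc n" using Suc by simp
    then show ?thesis by (intro sum.cong) auto
  qed
qed

lemma SS_split:
  assumes b2: "b \<ge> 2"
  shows "SS b h = (\<Sum>d<b. SS b (h div b + (if d < h mod b then 1 else 0))
                       + d * (h div b + (if d < h mod b then 1 else 0)))"
proof -
  define q where "q = h div b"
  define t where "t = h mod b"
  have tb: "t < b" using b2 by (simp add: t_def)
  have h: "h = b*q + t" by (simp add: q_def t_def)
  have "(\<Sum>d<b. SS b (q + (if d < t then 1 else 0)) + d * (q + (if d < t then 1 else 0)))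
      = (\<Sum>d<b. (SS b q + d*q) + (if d < t then digit_sum b q + d else 0))"
    by (rule sum.cong) (auto simp: SS_def)
  also have "\<dots> = b * SS b q + q * tri b + (\<Sum>d<t. digit_sum b q + d)"
  proof -
    have "(\<Sum>d<b. d*q) = q * tri b" by (simp add: tri_def sum_distrib_left mult.commute)
    then show ?thesis using sum_ind[of t b "\<lambda>d. digit_sum b q + d"] tb
      by (simp add: sum.distrib)
  qed
  also have "\<dots> = SS b h"
    using SS_rec[OF b2 tb, of q] h by (simp add: sum.distrib tri_def)
  finally show ?thesis by (simp add: q_def t_def)
qed

lemma main_ineq:
  assumes b2: "b \<ge> 2"
  shows "(\<forall>k l. k \<le> l \<longrightarrow> l < b \<longrightarrow> h l \<le> h k) \<longrightarrow>
         (\<Sum>k<b. SS b (h k) + k * h k) \<le> SS b (\<Sum>k<b. h k)"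
proof (induction "\<Sum>k<b. h k" arbitrary: h rule: less_induct)
  case less
  show ?case
  proof
    assume desc: "\<forall>k l. k \<le> l \<longrightarrow> l < b \<longrightarrow> h l \<le> h k"
    define N where "N = (\<Sum>k<b. h k)"
    show "(\<Sum>k<b. SS b (h k) + k * h k) \<le> SS b (\<Sum>k<b. h k)"
    proof (cases "\<forall>k<b. h k \<le> b")
      case True
      have "(\<Sum>k<b. SS b (h k) + k * h k) = RR b h"
        unfolding RR_def by (rule sum.cong) (use True SS_small b2 in auto)
      also have "\<dots> \<le> LL b N" unfolding N_def by (rule RL[OF desc]) (use True in auto)
      also have "LL b N = SS b N"
      proof -
        have "N \<le> b*b" unfolding N_def using sum_mono[of "{..<b}" h "\<lambda>_. b"] True by simp
        then show ?thesis unfolding LL_def SS_def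
          by (intro sum.cong) (use ds_two b2 in auto)
      qed
      finally show ?thesis by (simp add: N_def)
    next
      case False
      then obtain k1 where k1: "k1 < b" "h k1 > b" by auto
      define q where "q = (\<lambda>k. h k div b)"
      define t where "t = (\<lambda>k. h k mod b)"
      define m where "m = (\<lambda>d k. q k + (if d < t k then 1 else 0))"
      define \<tau> where "\<tau> = (\<lambda>d. \<Sum>k<b. (if d < t k then 1 else 0::nat))"
      define Q where "Q = (\<Sum>k<b. q k)"
      have tb: "t k < b" for k using b2 by (simp add: t_def)
      have hk: "h k = b * q k + t k" for k by (simp add: q_def t_def)
      have ti: "(\<Sum>d<b. if d < t k then 1 else 0::nat) = t k" for k
      proof -
        have "(\<Sum>d<b. if d < t k then 1 else 0::nat) = (\<Sum>d<t k. 1)"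
          using sum_ind[of "t k" b "\<lambda>_. 1::nat"] tb[of k] by simp
        then show ?thesis by simp
      qed
      have hm: "h k = (\<Sum>d<b. m d k)" for k
        using ti[of k] hk[of k]
        by (simp add: m_def sum.distrib)
      have Cd: "(\<Sum>k<b. m d k) = Q + \<tau> d" for d
        by (simp add: m_def Q_def \<tau>_def sum.distrib)
      have qb: "2 * q k \<le> b * q k" for k using b2 by (intro mult_le_mono1)
      have mle: "m d k \<le> h k" for d k
      proof (cases "d < t k")
        case True
        then have "m d k = q k + 1" by (simp add: m_def)
        then show ?thesis using hk[of k] qb[of k] True by linarith
      next
        case False
        then have "m d k = q k" by (simp add: m_def)
        then show ?thesis using hk[of k] qb[of k] by linarith
      qed
      have q1: "q k1 \<ge> 1"
      proof (rule ccontr)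
        assume "\<not> q k1 \<ge> 1"
        then have "h k1 = t k1" using hk[of k1] by simp
        then show False using tb[of k1] k1 by simp
      qed
      have mlt: "m d k1 < h k1" for d
      proof (cases "d < t k1")
        case True
        then have "m d k1 = q k1 + 1" by (simp add: m_def)
        then show ?thesis using hk[of k1] qb[of k1] q1 True by linarith
      next
        case False
        then have "m d k1 = q k1" by (simp add: m_def)
        then show ?thesis using hk[of k1] qb[of k1] q1 by linarith
      qed
      have Cless: "(\<Sum>k<b. m d k) < N" for d
        unfolding N_def using k1 mle mlt by (intro sum_strict_mono_ex1) auto
      have mdesc: "\<forall>k l. k \<le> l \<longrightarrow> l < b \<longrightarrow> m d l \<le> m d k" for d
      proof (intro allI impI)
        fix k l assume kl: "k \<le> l" "l < b"
        then have hkl: "h l \<le> h k" using desc by blast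
        then have qkl: "q l \<le> q k" by (simp add: q_def div_le_mono)
        show "m d l \<le> m d k"
        proof (cases "q l = q k")
          case True
          then have "t l \<le> t k" using hk[of k] hk[of l] hkl by simp
          then show ?thesis using True by (auto simp: m_def)
        next
          case False then show ?thesis using qkl by (auto simp: m_def)
        qed
      qed
      have IHd: "(\<Sum>k<b. SS b (m d k) + k * m d k) \<le> SS b (Q + \<tau> d)" for d
        using less[of "m d"] Cless[of d] mdesc[of d] Cd[of d] by (simp add: N_def)
      have "(\<Sum>k<b. SS b (h k) + k * h k)
          = (\<Sum>k<b. \<Sum>d<b. (SS b (m d k) + d * m d k) + k * m d k)"
      proof (rule sum.cong[OF refl])
        fix k
        have "SS b (h k) = (\<Sum>d<b. SS b (m d k) + d * m d k)"
          using SS_split[OF b2, of "h k"] by (simp add: m_def q_def t_def)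
        then show "SS b (h k) + k * h k = (\<Sum>d<b. (SS b (m d k) + d * m d k) + k * m d k)"
          using hm[of k] by (simp add: sum.distrib sum_distrib_left)
      qed
      also have "\<dots> = (\<Sum>d<b. \<Sum>k<b. (SS b (m d k) + k * m d k) + d * m d k)"
        by (subst sum.swap) (simp add: algebra_simps)
      also have "\<dots> = (\<Sum>d<b. (\<Sum>k<b. SS b (m d k) + k * m d k) + d * (Q + \<tau> d))"
        by (simp add: sum.distrib sum_distrib_left Cd[symmetric])
      also have "\<dots> \<le> (\<Sum>d<b. SS b (Q + \<tau> d) + d * (Q + \<tau> d))"
        using IHd by (intro sum_mono) simp
      also have "\<dots> \<le> SS b (b*Q + (\<Sum>d<b. \<tau> d))"
      proof (rule SC[OF b2])
        show "\<forall>k l. k \<le> l \<longrightarrow> l < b \<longrightarrow> \<tau> l \<le> \<tau> k"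
          unfolding \<tau>_def by (auto intro!: sum_mono)
        show "\<forall>d<b. \<tau> d \<le> b"
          unfolding \<tau>_def using sum_mono[of "{..<b}" "\<lambda>k. if _ < t k then 1 else 0::nat" "\<lambda>_. 1"]
          by (auto simp del: sum_mono)
      qed
      also have "b*Q + (\<Sum>d<b. \<tau> d) = (\<Sum>k<b. h k)"
      proof -
        have "(\<Sum>d<b. \<tau> d) = (\<Sum>k<b. \<Sum>d<b. (if d < t k then 1 else 0::nat))"
          unfolding \<tau>_def by (rule sum.swap)
        also have "\<dots> = (\<Sum>k<b. t k)"
          using ti by simp
        finally show ?thesis using hk by (simp add: Q_def sum_distrib_left sum.distrib)
      qed
      finally show ?thesis .
    qed
  qed
qed

lemma rev_reindex: "(\<Sum>k<r. g k (r - k)) = (\<Sum>i=1..r. g (r - i) (i::nat))"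
  by (rule sum.reindex_bij_witness[of _ "\<lambda>i. r - i" "\<lambda>k. r - k"]) auto

theorem theorem5:
  fixes b r :: nat and n :: "nat \<Rightarrow> nat"
  assumes "b \<ge> 2" and "1 \<le> r" and "r \<le> b"
    and "\<And>i j. 1 \<le> i \<Longrightarrow> i \<le> j \<Longrightarrow> j \<le> r \<Longrightarrow> n i \<le> n j"
  shows "(\<Sum>i = 1..r. S b (n i)) + (\<Sum>i = 1..r - 1. (r - i) * n i)
           \<le> S b (\<Sum>i = 1..r. n i)"
proof -
  define h where "h = (\<lambda>k. if k < r then n (r - k) else 0)"
  have desc: "\<forall>k l. k \<le> l \<longrightarrow> l < b \<longrightarrow> h l \<le> h k"
  proof (intro allI impI)
    fix k l assume kl: "k \<le> l" "l < b"
    show "h l \<le> h k"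
    proof (cases "l < r")
      case True
      then show ?thesis using kl assms(4)[of "r - l" "r - k"] by (simp add: h_def)
    qed (simp add: h_def)
  qed
  have M: "(\<Sum>k<b. SS b (h k) + k * h k) \<le> SS b (\<Sum>k<b. h k)"
    using main_ineq[OF assms(1)] desc by blast
  have e1: "(\<Sum>k<b. h k) = (\<Sum>i=1..r. n i)"
  proof -
    have "(\<Sum>k<b. h k) = (\<Sum>k<r. n (r - k))"
      unfolding h_def by (rule sum_ind[OF assms(3)])
    also have "\<dots> = (\<Sum>i=1..r. n i)" using rev_reindex[of "\<lambda>_ j. n j" r] by simp
    finally show ?thesis .
  qed
  have e2: "(\<Sum>k<b. SS b (h k)) = (\<Sum>i=1..r. S b (n i))"
  proof -
    have "(\<Sum>k<b. SS b (h k)) = (\<Sum>k<b. if k < r then SS b (n (r - k)) else 0)"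
      by (rule sum.cong) (auto simp: h_def SS_def)
    also have "\<dots> = (\<Sum>k<r. SS b (n (r - k)))" by (rule sum_ind[OF assms(3)])
    also have "\<dots> = (\<Sum>i=1..r. SS b (n i))" using rev_reindex[of "\<lambda>_ j. SS b (n j)" r] by simp
    finally show ?thesis by (simp add: S_SS)
  qed
  have e3: "(\<Sum>k<b. k * h k) = (\<Sum>i = 1..r - 1. (r - i) * n i)"
  proof -
    have "(\<Sum>k<b. k * h k) = (\<Sum>k<b. if k < r then k * n (r - k) else 0)"
      by (rule sum.cong) (auto simp: h_def)
    also have "\<dots> = (\<Sum>k<r. k * n (r - k))" by (rule sum_ind[OF assms(3)])
    also have "\<dots> = (\<Sum>i=1..r. (r - i) * n i)" using rev_reindex[of "\<lambda>k j. k * n j" r] by simp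
    also have "\<dots> = (\<Sum>i=1..r - 1. (r - i) * n i)"
    proof -
      have "{1..r} = insert r {1..r-1}" using assms(2) by auto
      then show ?thesis using assms(2) by simp
    qed
    finally show ?thesis .
  qed
  show ?thesis using M e1 e2 e3 by (simp add: sum.distrib S_SS)
qed

end
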